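(* Let $\tau>0$, $a\ge2$, let $s,d$ be integers with $1\le s\le d$ and let $\ell\in\mathcal L$. Then $$\inf_{\hat T}\sup_{P_\xi\in\mathcal P_{a,\tau}}\sup_{\sigma>0}\sup_{\theta\in\Theta_s}\mathbf E_{\theta,P_\xi,\sigma}\,\ell\Big(c\,\phi_{\rm pol}(s,d)^{-1}\Big|\frac{\hat T}{\sigma^2}-1\Big|\Big)\ge c',$$ where $\phi_{\rm pol}(s,d)=\max\big(\frac1{\sqrt d},(\frac sd)^{1-\frac2a}\big)$ and $c,c'>0$ depend only on $\ell$, $a$ and $\tau$.
   Context: Model: $Y_i=\theta_i+\sigma\xi_i$, $i=1,\dots,d$, $\theta\in\mathbb R^d$, $\sigma>0$, $\xi_i$ i.i.d. with distribution $P_\xi$; $\mathbf E_{\theta,P_\xi,\sigma}$ expectation; $\Theta_s=\{\theta:\|\theta\|_0\le s\}$. For $\tau>0,a\ge2$, $\mathcal P_{a,\tau}$: distributions with $\mathbf E\xi_1=0,\mathbf E\xi_1^2=1$, $\mathbf P(|\xi_1|>t)\le(\tau/t)^a$ for all $t\ge2$. $\mathcal L$: nondecreasing $\ell:[0,\infty)\to[0,\infty)$, $\ell(0)=0$, $\ell\not\equiv0$; $\inf_{\hat T}$ over all estimators. *)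

theory Defs
  imports "HOL-Probability.Probability"
begin

definition noise_class :: "real \<Rightarrow> real \<Rightarrow> real measure set" where
  "noise_class a \<tau> = {P. prob_space P \<and> sets P = sets borel
      \<and> integrable P (\<lambda>x. x) \<and> (\<integral>x. x \<partial>P) = 0
      \<and> integrable P (\<lambda>x. x\<^sup>2) \<and> (\<integral>x. x\<^sup>2 \<partial>P) = 1
      \<and> (\<forall>t\<ge>2. measure P {x. \<bar>x\<bar> > t} \<le> (\<tau> / t) powr a)}"

text \<open>Loss functions: nondecreasing on [0,oo), vanishing at 0, not identically 0
(only values on [0,oo) matter).\<close>
definition loss_class :: "(real \<Rightarrow> real) set" where
  "loss_class = {L. mono_on {0..} L \<and> (\<forall>x\<ge>0. L x \<ge> 0) \<and> L 0 = 0
      \<and> (\<exists>x\<ge>0. L x \<noteq> 0)}"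

text \<open>s-sparse parameter vectors in R^d, with R^d represented by functions on {..<d}.\<close>
definition Theta :: "nat \<Rightarrow> nat \<Rightarrow> (nat \<Rightarrow> real) set" where
  "Theta d s = {\<theta>. \<theta> \<in> extensional {..<d} \<and> card {i\<in>{..<d}. \<theta> i \<noteq> 0} \<le> s}"

definition estimators :: "nat \<Rightarrow> ((nat \<Rightarrow> real) \<Rightarrow> real) set" where
  "estimators d = borel_measurable (PiM {..<d} (\<lambda>_. borel))"

definition phi_pol :: "real \<Rightarrow> nat \<Rightarrow> nat \<Rightarrow> real" where
  "phi_pol a s d = max (1 / sqrt (real d)) ((real s / real d) powr (1 - 2 / a))"

definition obs :: "nat \<Rightarrow> (nat \<Rightarrow> real) \<Rightarrow> real \<Rightarrow> (nat \<Rightarrow> real) \<Rightarrow> (nat \<Rightarrow> real)" where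
  "obs d \<theta> \<sigma> \<xi> = restrict (\<lambda>i. \<theta> i + \<sigma> * \<xi> i) {..<d}"

definition risk :: "(real \<Rightarrow> real) \<Rightarrow> real \<Rightarrow> nat \<Rightarrow> ((nat \<Rightarrow> real) \<Rightarrow> real)
    \<Rightarrow> real measure \<Rightarrow> real \<Rightarrow> (nat \<Rightarrow> real) \<Rightarrow> real \<Rightarrow> ennreal" where
  "risk L c d T P \<sigma> \<theta> \<phi> =
     (\<integral>\<^sup>+ \<xi>. ennreal (L (c / \<phi> * \<bar>T (obs d \<theta> \<sigma> \<xi>) / \<sigma>\<^sup>2 - 1\<bar>)) \<partial>(PiM {..<d} (\<lambda>_. P)))"

end

theory Submission
  imports Defs "HOL-Probability.Hoeffding"
begin

definition rad :: "real \<Rightarrow> real pmf" where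
  "rad v = map_pmf (\<lambda>b. if b then v else -v) (bernoulli_pmf (1/2))"
definition sym3 :: "real \<Rightarrow> real \<Rightarrow> real pmf" where
  "sym3 p v = bind_pmf (bernoulli_pmf p) (\<lambda>b. if b then rad v else return_pmf 0)"

lemma set_rad: "set_pmf (rad v) \<subseteq> {v, -v}"
  unfolding rad_def by auto

lemma set_sym3: "set_pmf (sym3 p v) \<subseteq> {v, -v, 0}"
  unfolding sym3_def using set_rad[of v] by (auto split: if_splits)

lemma finite_sym3: "finite (set_pmf (sym3 p v))"
  using set_sym3 finite_subset by blast

lemma exp_rad: "measure_pmf.expectation (rad v) (f::real\<Rightarrow>real) = (f v + f (-v)) / 2"
  unfolding rad_def by simp

lemma exp_sym3:
  assumes "0 \<le> p" "p \<le> 1"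
  shows "measure_pmf.expectation (sym3 p v) (f::real\<Rightarrow>real) = p * (f v + f (-v)) / 2 + (1 - p) * f 0"
proof -
  have "measure_pmf.expectation (sym3 p v) f =
     (\<Sum>a\<in>UNIV. pmf (bernoulli_pmf p) a *\<^sub>R measure_pmf.expectation (if a then rad v else return_pmf 0) f)"
    unfolding sym3_def
    by (rule pmf_expectation_bind) (auto simp: rad_def)
  also have "\<dots> = p * (f v + f (-v)) / 2 + (1 - p) * f 0"
    using assms by (simp add: UNIV_bool exp_rad)
  finally show ?thesis .
qed

lemma pmf_sym3:
  assumes "0 \<le> p" "p \<le> 1" "v \<noteq> 0"
  shows "pmf (sym3 p v) x = (if x = v \<or> x = -v then p/2 else if x = 0 then 1 - p else 0)"
proof -
  have "pmf (sym3 p v) x = measure_pmf.expectation (sym3 p v) (indicator {x})"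
    by (simp add: measure_pmf_single)
  also have "\<dots> = p * (indicator {x} v + indicator {x} (-v)) / 2 + (1 - p) * indicator {x} (0::real)"
    by (rule exp_sym3[OF assms(1,2)])
  finally show ?thesis using assms by (auto simp: indicator_def)
qed

lemma map_sym3_scale: "map_pmf (\<lambda>x. k * x) (sym3 p v) = sym3 p (k * v)"
  unfolding sym3_def rad_def
  by (auto simp: map_bind_pmf map_pmf_comp intro!: bind_pmf_cong map_pmf_cong)

lemma map_sym3_nz: assumes "v \<noteq> 0" shows "map_pmf (\<lambda>x. x \<noteq> 0) (sym3 p v) = bernoulli_pmf p"
proof -
  have "map_pmf (\<lambda>x. x \<noteq> 0) (sym3 p v) = bind_pmf (bernoulli_pmf p) return_pmf"
    unfolding sym3_def rad_def using assms
    by (auto simp: map_bind_pmf map_pmf_comp intro!: bind_pmf_cong)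
  then show ?thesis by (simp add: bind_return_pmf')
qed

definition Pb :: "real pmf \<Rightarrow> real measure" where
  "Pb \<xi> = distr (measure_pmf \<xi>) borel (\<lambda>x. x)"

lemma sets_Pb[simp]: "sets (Pb \<xi>) = sets borel"
  by (simp add: Pb_def)

lemma prob_space_Pb: "prob_space (Pb \<xi>)"
  unfolding Pb_def by (rule prob_space.prob_space_distr) (auto simp: measure_pmf.prob_space_axioms)

lemma emeasure_Pb: "A \<in> sets borel \<Longrightarrow> emeasure (Pb \<xi>) A = emeasure (measure_pmf \<xi>) A"
  unfolding Pb_def by (subst emeasure_distr) auto

lemma noise_Pb:
  assumes fin: "finite (set_pmf \<xi>)"
    and m1: "measure_pmf.expectation \<xi> (\<lambda>x. x) = 0"
    and m2: "measure_pmf.expectation \<xi> (\<lambda>x. x\<^sup>2) = 1"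
    and tl: "\<forall>t\<ge>2. measure_pmf.prob \<xi> {x. \<bar>x\<bar> > t} \<le> (\<tau> / t) powr a"
  shows "Pb \<xi> \<in> noise_class a \<tau>"
proof -
  have i1: "integrable (Pb \<xi>) (\<lambda>x. x)" unfolding Pb_def
    by (subst integrable_distr_eq) (auto intro: integrable_measure_pmf_finite[OF fin])
  have i2: "integrable (Pb \<xi>) (\<lambda>x. x\<^sup>2)" unfolding Pb_def
    by (subst integrable_distr_eq) (auto intro: integrable_measure_pmf_finite[OF fin])
  have e1: "(\<integral>x. x \<partial>Pb \<xi>) = 0" unfolding Pb_def
    by (subst integral_distr) (auto simp: m1)
  have e2: "(\<integral>x. x\<^sup>2 \<partial>Pb \<xi>) = 1" unfolding Pb_def
    by (subst integral_distr) (auto simp: m2)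
  have t: "measure (Pb \<xi>) {x. \<bar>x\<bar> > t} \<le> (\<tau> / t) powr a" if "t \<ge> 2" for t
  proof -
    have "{x::real. \<bar>x\<bar> > t} \<in> sets borel" by measurable
    then have "measure (Pb \<xi>) {x. \<bar>x\<bar> > t} = measure_pmf.prob \<xi> {x. \<bar>x\<bar> > t}"
      unfolding Pb_def by (subst measure_distr) auto
    then show ?thesis using tl that by simp
  qed
  show ?thesis unfolding noise_class_def
    using prob_space_Pb i1 i2 e1 e2 t by auto
qed

lemma PiM_Pb:
  assumes fin: "finite I"
  shows "PiM I (\<lambda>_. Pb \<xi>) = distr (measure_pmf (Pi_pmf I dflt (\<lambda>_. \<xi>))) (PiM I (\<lambda>_. borel)) (\<lambda>f. restrict f I)"
proof (rule product_sigma_finite.PiM_eqI[symmetric], goal_cases)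
  case 1
  interpret product_prob_space "\<lambda>_. Pb \<xi>"
    by (intro product_prob_spaceI prob_space_Pb)
  show ?case by unfold_locales
next
  case 2 show ?case by (rule fin)
next
  case 3
  have "sets (Pi\<^sub>M I (\<lambda>_. Pb \<xi>)) = sets (Pi\<^sub>M I (\<lambda>_. borel))"
    by (intro sets_PiM_cong) simp_all
  thus ?case by simp
next
  case (4 A)
  have A: "\<And>i. i \<in> I \<Longrightarrow> A i \<in> sets borel" using 4 by simp
  have "Pi\<^sub>E I A \<in> sets (Pi\<^sub>M I (\<lambda>i. borel))"
    using A by (intro sets_PiM_I_finite fin) auto
  hence "emeasure (distr (measure_pmf (Pi_pmf I dflt (\<lambda>_. \<xi>))) (Pi\<^sub>M I (\<lambda>i. borel))
          (\<lambda>x. restrict x I)) (Pi\<^sub>E I A) =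
         emeasure (measure_pmf (Pi_pmf I dflt (\<lambda>_. \<xi>))) ((\<lambda>x. restrict x I) -` Pi\<^sub>E I A)"
    by (subst emeasure_distr) (auto simp: space_PiM)
  also have "\<dots> = emeasure (measure_pmf (Pi_pmf I dflt (\<lambda>_. \<xi>))) (PiE_dflt I dflt A)"
    by (intro emeasure_eq_AE AE_pmfI) (auto simp: PiE_dflt_def set_Pi_pmf fin)
  also have "\<dots> = (\<Prod>i\<in>I. emeasure (measure_pmf \<xi>) (A i))"
    by (simp add: measure_pmf.emeasure_eq_measure measure_Pi_pmf_PiE_dflt fin prod_ennreal)
  also have "\<dots> = (\<Prod>i\<in>I. emeasure (Pb \<xi>) (A i))"
    using A by (intro prod.cong refl) (simp add: emeasure_Pb)
  finally show ?case .
qed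

lemma Pi_pmf_map':
  assumes "finite A"
  shows "Pi_pmf A d (\<lambda>i. map_pmf (g i) p) =
         map_pmf (\<lambda>f i. if i \<in> A then g i (f i) else d) (Pi_pmf A d' (\<lambda>_. p))"
proof -
  have "Pi_pmf A d (\<lambda>i. map_pmf (g i) p) = Pi_pmf A d (\<lambda>i. bind_pmf p (\<lambda>x. return_pmf (g i x)))"
    by (simp add: map_pmf_def)
  also have "\<dots> = bind_pmf (Pi_pmf A d' (\<lambda>_. p)) (\<lambda>f. Pi_pmf A d (\<lambda>i. return_pmf (g i (f i))))"
    by (rule Pi_pmf_bind[OF assms])
  also have "\<dots> = bind_pmf (Pi_pmf A d' (\<lambda>_. p)) (\<lambda>f. return_pmf (\<lambda>i. if i \<in> A then g i (f i) else d))"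
    using assms by simp
  also have "\<dots> = map_pmf (\<lambda>f i. if i \<in> A then g i (f i) else d) (Pi_pmf A d' (\<lambda>_. p))"
    by (simp add: map_pmf_def)
  finally show ?thesis .
qed

lemma loss_meas:
  assumes L: "L \<in> loss_class" and g: "g \<in> borel_measurable M" and nn: "\<And>x. g x \<ge> 0"
  shows "(\<lambda>x. L (g x)) \<in> borel_measurable M"
proof -
  define L' where "L' = (\<lambda>z. L (max z 0))"
  have mL: "mono_on {0..} L" using L by (simp add: loss_class_def)
  have "mono L'"
  proof (rule monoI)
    fix x y :: real assume "x \<le> y"
    then show "L' x \<le> L' y" unfolding L'_def
      by (intro mono_onD[OF mL]) auto
  qed
  then have "L' \<in> borel_measurable borel" by (rule borel_measurable_mono)
  then have "(\<lambda>x. L' (g x)) \<in> borel_measurable M" using g by (rule measurable_compose[rotated])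
  moreover have "(\<lambda>x. L' (g x)) = (\<lambda>x. L (g x))"
    unfolding L'_def by (intro ext) (simp add: max_absorb1 nn)
  ultimately show ?thesis by simp
qed

lemma obs_meas: "obs d \<theta> \<sigma> \<in> measurable (PiM {..<d} (\<lambda>_. borel)) (PiM {..<d} (\<lambda>_. borel))"
proof -
  have "(\<lambda>f. \<theta> i + \<sigma> * f i) \<in> borel_measurable (PiM {..<d} (\<lambda>_. borel))" if "i \<in> {..<d}" for i
  proof -
    have "(\<lambda>f. f i) \<in> borel_measurable (PiM {..<d} (\<lambda>_. borel))"
      by (rule measurable_component_singleton[OF that])
    then show ?thesis by (intro borel_measurable_add[OF measurable_const] borel_measurable_times[OF measurable_const]) auto
  qed
  then show ?thesis unfolding obs_def by (rule measurable_restrict)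
qed

lemma obs_restrict: "obs d \<theta> \<sigma> (restrict f {..<d}) = obs d \<theta> \<sigma> f"
  unfolding obs_def by auto

lemma risk_Pb:
  assumes L: "L \<in> loss_class" and T: "T \<in> estimators d" and k: "c / \<phi> \<ge> 0"
  shows "risk L c d T (Pb \<xi>) \<sigma> \<theta> \<phi> =
     (\<integral>\<^sup>+ f. ennreal (L (c / \<phi> * \<bar>T (obs d \<theta> \<sigma> f) / \<sigma>\<^sup>2 - 1\<bar>)) \<partial>measure_pmf (Pi_pmf {..<d} dflt (\<lambda>_. \<xi>)))"
proof -
  have Tm: "T \<in> borel_measurable (PiM {..<d} (\<lambda>_. borel))" using T by (simp add: estimators_def)
  have gm: "(\<lambda>f. c / \<phi> * \<bar>T (obs d \<theta> \<sigma> f) / \<sigma>\<^sup>2 - 1\<bar>) \<in> borel_measurable (PiM {..<d} (\<lambda>_. borel))"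
  proof -
    have hT: "(\<lambda>f. T (obs d \<theta> \<sigma> f)) \<in> borel_measurable (PiM {..<d} (\<lambda>_. borel))"
      using measurable_compose[OF obs_meas Tm] by (simp add: o_def)
    show ?thesis
      by (rule borel_measurable_times[OF measurable_const borel_measurable_abs[OF borel_measurable_diff[OF borel_measurable_divide[OF hT measurable_const] measurable_const]]]) auto
  qed
  have m: "(\<lambda>f. ennreal (L (c / \<phi> * \<bar>T (obs d \<theta> \<sigma> f) / \<sigma>\<^sup>2 - 1\<bar>))) \<in> borel_measurable (PiM {..<d} (\<lambda>_. borel))"
    by (rule measurable_compose[OF loss_meas[OF L gm] measurable_ennreal]) (intro mult_nonneg_nonneg[OF k] abs_ge_zero)
  have "risk L c d T (Pb \<xi>) \<sigma> \<theta> \<phi> = (\<integral>\<^sup>+ f. ennreal (L (c / \<phi> * \<bar>T (obs d \<theta> \<sigma> f) / \<sigma>\<^sup>2 - 1\<bar>))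
      \<partial>distr (measure_pmf (Pi_pmf {..<d} dflt (\<lambda>_. \<xi>))) (PiM {..<d} (\<lambda>_. borel)) (\<lambda>f. restrict f {..<d}))"
    unfolding risk_def by (subst PiM_Pb[where dflt=dflt]) auto
  also have "\<dots> = (\<integral>\<^sup>+ f. ennreal (L (c / \<phi> * \<bar>T (obs d \<theta> \<sigma> (restrict f {..<d})) / \<sigma>\<^sup>2 - 1\<bar>)) \<partial>measure_pmf (Pi_pmf {..<d} dflt (\<lambda>_. \<xi>)))"
    by (rule nn_integral_distr) (use m in \<open>auto simp: space_PiM\<close>)
  finally show ?thesis by (simp only: obs_restrict)
qed

lemma gap:
  assumes L: "L \<in> loss_class" and s1: "0 < s1" "s1 < s2" and k: "k \<ge> 0"
    and x0: "x0 \<ge> 0" "k * ((s2 - s1) / (2 * s2)) \<ge> x0"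
  shows "ennreal (L x0) \<le> ennreal (L (k * \<bar>t / s1 - 1\<bar>)) + ennreal (L (k * \<bar>t / s2 - 1\<bar>))"
proof -
  have mL: "mono_on {0..} L" and nn: "\<And>x. x \<ge> 0 \<Longrightarrow> L x \<ge> 0" using L by (auto simp: loss_class_def)
  have s2: "s2 > 0" using s1 by simp
  show ?thesis
  proof (cases "t \<le> (s1 + s2) / 2")
    case True
    have "(s2 - s1) / (2 * s2) \<le> \<bar>t / s2 - 1\<bar>"
    proof -
      have "(s2 - s1) / (2 * s2) = (s2 - (s1 + s2) / 2) / s2" using s2 by (simp add: field_simps)
      also have "\<dots> \<le> (s2 - t) / s2" using True s2 by (intro divide_right_mono) auto
      also have "\<dots> = - (t / s2 - 1)" using s2 by (simp add: field_simps)
      also have "\<dots> \<le> \<bar>t / s2 - 1\<bar>" by (rule abs_ge_minus_self)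
      finally show ?thesis .
    qed
    then have "x0 \<le> k * \<bar>t / s2 - 1\<bar>" using x0 k mult_left_mono order_trans by blast
    then have "L x0 \<le> L (k * \<bar>t / s2 - 1\<bar>)" using x0 by (intro mono_onD[OF mL]) auto
    then show ?thesis using nn[of "k * \<bar>t / s1 - 1\<bar>"] k
      by (intro add_increasing) (auto intro: ennreal_leI)
  next
    case False
    have "(s2 - s1) / (2 * s2) \<le> \<bar>t / s1 - 1\<bar>"
    proof -
      have "(s2 - s1) / (2 * s2) \<le> (s2 - s1) / (2 * s1)" using s1 by (intro divide_left_mono) auto
      also have "\<dots> = ((s1 + s2) / 2 - s1) / s1" using s1 by (simp add: field_simps)
      also have "\<dots> \<le> (t - s1) / s1" using False s1 by (intro divide_right_mono) auto
      also have "\<dots> = t / s1 - 1" using s1 by (simp add: field_simps)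
      also have "\<dots> \<le> \<bar>t / s1 - 1\<bar>" by (rule abs_ge_self)
      finally show ?thesis .
    qed
    then have "x0 \<le> k * \<bar>t / s1 - 1\<bar>" using x0 k mult_left_mono order_trans by blast
    then have "L x0 \<le> L (k * \<bar>t / s1 - 1\<bar>)" using x0 by (intro mono_onD[OF mL]) auto
    then show ?thesis using nn[of "k * \<bar>t / s2 - 1\<bar>"] k
      by (intro add_increasing2) (auto intro: ennreal_leI)
  qed
qed

lemma ratio_bound:
  fixes u :: real and N M d :: nat
  assumes d: "d \<ge> 1" and u: "u = 1 / (2 * sqrt d)" and NM: "N + M = d" and G: "2 * real N \<le> d + sqrt d"
  shows "(1 - u) ^ N * (1 + u) ^ M \<ge> 3 / 8"
proof -
  have sd: "sqrt d > 0" using d by simp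
  have sd1: "sqrt d \<ge> 1" using d by simp
  have u0: "0 < u" "u \<le> 1/2" unfolding u using sd sd1 by (auto simp: field_simps)
  have uu: "u\<^sup>2 = 1 / (4 * d)" unfolding u by (simp add: power_divide power_mult_distrib)
  have B: "1 - real n * u\<^sup>2 \<le> (1 - u\<^sup>2) ^ n" for n
    using Bernoulli_inequality[of "- u\<^sup>2" n] u0 mult_le_one[of u u] by (simp add: power2_eq_square)
  have sq: "(1 - u) * (1 + u) = 1 - u\<^sup>2" by (simp add: power2_eq_square algebra_simps)
  show ?thesis
  proof (cases "N \<le> M")
    case True
    have "(1 - u) ^ N * (1 + u) ^ M = (1 - u\<^sup>2) ^ N * (1 + u) ^ (M - N)"
      using True by (simp add: sq[symmetric] power_mult_distrib power_add[symmetric] mult.assoc)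
    also have "\<dots> \<ge> (1 - u\<^sup>2) ^ N * 1"
      using u0 by (intro mult_left_mono) (auto simp: power2_eq_square intro!: one_le_power zero_le_power mult_le_one)
    finally have 1: "(1 - u) ^ N * (1 + u) ^ M \<ge> (1 - u\<^sup>2) ^ N" by simp
    have "real N * u\<^sup>2 \<le> real d * u\<^sup>2" using NM u0 by (intro mult_right_mono) auto
    also have "\<dots> = 1/4" using uu d by simp
    finally show ?thesis using 1 B[of N] by linarith
  next
    case False
    have "(1 - u) ^ N * (1 + u) ^ M = (1 - u\<^sup>2) ^ M * (1 - u) ^ (N - M)"
    proof -
      have "N = M + (N - M)" using False by simp
      then have "(1 - u) ^ N = (1 - u) ^ M * (1 - u) ^ (N - M)" by (metis power_add)
      moreover have "(1 - u) ^ M * (1 + u) ^ M = (1 - u\<^sup>2) ^ M" by (simp add: sq[symmetric] power_mult_distrib)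
      ultimately show ?thesis by (simp add: algebra_simps)
    qed
    also have "\<dots> \<ge> (1 - real M * u\<^sup>2) * (1 - real (N - M) * u)"
    proof (rule mult_mono)
      show "1 - real M * u\<^sup>2 \<le> (1 - u\<^sup>2) ^ M" by (rule B)
      show "1 - real (N - M) * u \<le> (1 - u) ^ (N - M)"
        using Bernoulli_inequality[of "- u" "N - M"] u0 by simp
      show "0 \<le> (1 - u\<^sup>2) ^ M" using u0 by (intro zero_le_power) (auto simp: power2_eq_square intro: mult_le_one)
      have "real (N - M) * u \<le> 1/2"
      proof -
        have "real (N - M) = 2 * real N - d" using False NM by auto
        then have "real (N - M) \<le> sqrt d" using G by simp
        then have "real (N - M) * u \<le> sqrt d * u" using u0 by (intro mult_right_mono) auto
        also have "\<dots> = 1/2" using u sd by simp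
        finally show ?thesis .
      qed
      then show "0 \<le> 1 - real (N - M) * u" by simp
    qed
    finally have 1: "(1 - u) ^ N * (1 + u) ^ M \<ge> (1 - real M * u\<^sup>2) * (1 - real (N - M) * u)" .
    have a: "real M * u\<^sup>2 \<le> 1/4"
    proof -
      have "real M * u\<^sup>2 \<le> real d * u\<^sup>2" using NM u0 by (intro mult_right_mono) auto
      also have "\<dots> = 1/4" using uu d by simp
      finally show ?thesis .
    qed
    have b: "real (N - M) * u \<le> 1/2"
    proof -
      have "real (N - M) = 2 * real N - d" using False NM by auto
      then have "real (N - M) \<le> sqrt d" using G by simp
      then have "real (N - M) * u \<le> sqrt d * u" using u0 by (intro mult_right_mono) auto
      also have "\<dots> = 1/2" using u sd by simp
      finally show ?thesis .
    qed
    have "(3/4) * (1/2) \<le> (1 - real M * u\<^sup>2) * (1 - real (N - M) * u)"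
      using a b by (intro mult_mono) auto
    then show ?thesis using 1 by simp
  qed
qed

lemma prob_pmf_exp: "measure_pmf.prob M A = measure_pmf.expectation M (indicator A :: _ \<Rightarrow> real)"
  by (simp add: measure_pmf.emeasure_eq_measure)

lemma noise_sym3:
  assumes p: "0 < p" "p \<le> 1" and v: "p * v\<^sup>2 = 1" "\<bar>v\<bar> \<le> 2"
  shows "Pb (sym3 p v) \<in> noise_class a \<tau>"
proof (rule noise_Pb)
  show "finite (set_pmf (sym3 p v))" by (rule finite_sym3)
  show "measure_pmf.expectation (sym3 p v) (\<lambda>x. x) = 0"
    using p by (simp add: exp_sym3)
  show "measure_pmf.expectation (sym3 p v) (\<lambda>x. x\<^sup>2) = 1"
    using p v by (simp add: exp_sym3)
  show "\<forall>t\<ge>2. measure_pmf.prob (sym3 p v) {x. \<bar>x\<bar> > t} \<le> (\<tau> / t) powr a"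
  proof (intro allI impI)
    fix t :: real assume t: "t \<ge> 2"
    have e: "measure_pmf.expectation (sym3 p v) (indicator {x. \<bar>x\<bar> > t} :: real \<Rightarrow> real) =
      p * (indicator {x. \<bar>x\<bar> > t} v + indicator {x. \<bar>x\<bar> > t} (-v)) / 2 + (1 - p) * indicator {x. \<bar>x\<bar> > t} (0::real)"
      by (rule exp_sym3) (use p in auto)
    have "indicator {x. \<bar>x\<bar> > t} v = (0::real)" "indicator {x. \<bar>x\<bar> > t} (-v) = (0::real)"
      "indicator {x. \<bar>x\<bar> > t} (0::real) = (0::real)"
      using v t by (auto simp: indicator_def)
    with e have "measure_pmf.expectation (sym3 p v) (indicator {x. \<bar>x\<bar> > t} :: real \<Rightarrow> real) = 0" by simp
    then have "measure_pmf.prob (sym3 p v) {x. \<bar>x\<bar> > t} = 0" by (simp only: prob_pmf_exp)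
    then show "measure_pmf.prob (sym3 p v) {x. \<bar>x\<bar> > t} \<le> (\<tau> / t) powr a" by simp
  qed
qed

definition Q :: "nat \<Rightarrow> real \<Rightarrow> (nat \<Rightarrow> real) pmf" where
  "Q d p = Pi_pmf {..<d} 0 (\<lambda>_. sym3 p 1)"

definition theta0 :: "nat \<Rightarrow> nat \<Rightarrow> real" where
  "theta0 d = restrict (\<lambda>_. 0) {..<d}"

lemma theta0_Theta: "theta0 d \<in> Theta d s"
  unfolding theta0_def Theta_def by auto

lemma risk_A:
  assumes L: "L \<in> loss_class" and T: "T \<in> estimators d" and k: "c / \<phi> \<ge> 0" and p: "0 < p"
  shows "risk L c d T (Pb (sym3 p (1 / sqrt p))) (sqrt p) (theta0 d) \<phi> =
    (\<integral>\<^sup>+ y. ennreal (L (c / \<phi> * \<bar>T (restrict y {..<d}) / p - 1\<bar>)) \<partial>measure_pmf (Q d p))"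
proof -
  have "Q d p = Pi_pmf {..<d} 0 (\<lambda>_. map_pmf (\<lambda>x. sqrt p * x) (sym3 p (1 / sqrt p)))"
    unfolding Q_def using p by (simp add: map_sym3_scale)
  also have "\<dots> = map_pmf (\<lambda>h. (\<lambda>x. sqrt p * x) \<circ> h) (Pi_pmf {..<d} 0 (\<lambda>_. sym3 p (1 / sqrt p)))"
    by (rule Pi_pmf_map) auto
  finally have Qe: "Q d p = \<dots>" .
  have ob: "obs d (theta0 d) (sqrt p) f = restrict ((\<lambda>x. sqrt p * x) \<circ> f) {..<d}" for f
    unfolding obs_def theta0_def by auto
  show ?thesis
    unfolding risk_Pb[OF L T k, where dflt=0] Qe using p by (simp add: ob)
qed

lemma pmf_Q_ratio:
  assumes u: "0 \<le> u" "u \<le> 1"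
  shows "pmf (Q d ((1 - u) / 2)) y =
         (\<Prod>i\<in>{..<d}. (if y i = 0 then 1 + u else 1 - u)) * pmf (Q d (1/2)) y"
proof -
  have pt: "pmf (sym3 ((1 - u) / 2) 1) v = (if v = 0 then 1 + u else 1 - u) * pmf (sym3 (1/2) 1) v" for v
    using u by (simp add: pmf_sym3 field_simps)
  show ?thesis unfolding Q_def
    by (auto simp: pmf_Pi pt prod.distrib)
qed

lemma prod_ratio:
  fixes y :: "nat \<Rightarrow> real"
  shows "(\<Prod>i\<in>{..<d}. (if y i = 0 then 1 + u else 1 - (u::real))) =
     (1 - u) ^ card {i\<in>{..<d}. y i \<noteq> 0} * (1 + u) ^ card {i\<in>{..<d}. y i = 0}"
proof -
  have "(\<Prod>i\<in>{..<d}. (if y i = 0 then 1 + u else 1 - (u::real))) =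
     prod (\<lambda>_. 1 + u) ({..<d} \<inter> {i. y i = 0}) * prod (\<lambda>_. 1 - u) ({..<d} \<inter> - {i. y i = 0})"
    by (rule prod.If_cases) (rule finite_lessThan)
  also have "\<dots> = (1 + u) ^ card ({..<d} \<inter> {i. y i = 0}) * (1 - u) ^ card ({..<d} \<inter> - {i. y i = 0})"
    by simp
  also have "{..<d} \<inter> {i. y i = 0} = {i\<in>{..<d}. y i = 0}" by auto
  also have "{..<d} \<inter> - {i. y i = 0} = {i\<in>{..<d}. y i \<noteq> 0}" by auto
  finally show ?thesis by simp
qed

lemma card_split: "card {i\<in>{..<d}. y i \<noteq> 0} + card {i\<in>{..<d}. (y::nat\<Rightarrow>real) i = 0} = d"
proof -
  have "card {i\<in>{..<d}. y i \<noteq> 0} + card {i\<in>{..<d}. y i = 0} = card ({i\<in>{..<d}. y i \<noteq> 0} \<union> {i\<in>{..<d}. y i = 0})"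
    by (rule card_Un_disjoint[symmetric]) auto
  also have "{i\<in>{..<d}. y i \<noteq> 0} \<union> {i\<in>{..<d}. y i = 0} = {..<d}" by auto
  finally show ?thesis by simp
qed

definition Gset :: "nat \<Rightarrow> (nat \<Rightarrow> real) set" where
  "Gset d = {y. 2 * real (card {i\<in>{..<d}. y i \<noteq> 0}) \<le> d + sqrt d}"

lemma map_Q_binomial:
  "map_pmf (\<lambda>y. card {i\<in>{..<d}. y i \<noteq> 0}) (Q d p) = binomial_pmf d p" if "0 \<le> p" "p \<le> 1"
proof -
  have "Pi_pmf {..<d} False (\<lambda>_. bernoulli_pmf p) = Pi_pmf {..<d} False (\<lambda>_. map_pmf (\<lambda>x. x \<noteq> 0) (sym3 p 1))"
    by (simp add: map_sym3_nz)
  also have "\<dots> = map_pmf (\<lambda>h. (\<lambda>x. x \<noteq> 0) \<circ> h) (Q d p)"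
    unfolding Q_def by (rule Pi_pmf_map) auto
  finally have e: "Pi_pmf {..<d} False (\<lambda>_. bernoulli_pmf p) = \<dots>" .
  have "binomial_pmf d p = map_pmf (\<lambda>f. card {x\<in>{..<d}. f x}) (Pi_pmf {..<d} False (\<lambda>_. bernoulli_pmf p))"
    by (rule binomial_pmf_altdef') (use that in auto)
  also have "\<dots> = map_pmf (\<lambda>y. card {i\<in>{..<d}. y i \<noteq> 0}) (Q d p)"
    unfolding e by (simp add: map_pmf_comp)
  finally show ?thesis by simp
qed

lemma Gset_prob:
  assumes d: "d \<ge> 1"
  shows "measure_pmf.prob (Q d (1/2)) (Gset d) \<ge> 1/3"
proof -
  have "measure_pmf.prob (Q d (1/2)) (Gset d) =
        measure_pmf.prob (map_pmf (\<lambda>y. card {i\<in>{..<d}. y i \<noteq> 0}) (Q d (1/2))) {n. 2 * real n \<le> d + sqrt d}"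
    by (simp add: Gset_def)
  also have "\<dots> = measure_pmf.prob (binomial_pmf d (1/2)) {n. 2 * real n \<le> d + sqrt d}"
    by (subst map_Q_binomial) auto
  also have "\<dots> = 1 - measure_pmf.prob (binomial_pmf d (1/2)) (- {n. 2 * real n \<le> d + sqrt d})"
    using measure_pmf.prob_compl[of "{n. 2 * real n \<le> d + sqrt d}" "binomial_pmf d (1/2)"]
    by (simp add: Compl_eq_Diff_UNIV)
  finally have e: "measure_pmf.prob (Q d (1/2)) (Gset d) = \<dots>" .
  have "measure_pmf.prob (binomial_pmf d (1/2)) (- {n. 2 * real n \<le> d + sqrt d}) \<le>
        measure_pmf.prob (binomial_pmf d (1/2)) {x. real d * (1/2) + sqrt d / 2 \<le> real x}"
    by (intro measure_pmf.finite_measure_mono) auto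
  also have "\<dots> \<le> exp (- 2 * (sqrt d / 2)\<^sup>2 / real d)"
    using d by (intro binomial_distribution.prob_ge) (auto simp: binomial_distribution_def)
  also have "\<dots> = exp (- 1 / 2)" using d by (simp add: power_divide)
  also have "\<dots> \<le> 2 / 3"
  proof -
    have "1 + 1/2 \<le> exp (1/2::real)" by (rule exp_ge_add_one_self)
    then have "exp (-1/2::real) * (3/2) \<le> exp (-1/2) * exp (1/2)"
      by (intro mult_left_mono) auto
    also have "\<dots> = 1" by (simp flip: exp_add)
    finally show ?thesis by simp
  qed
  finally show ?thesis using e by simp
qed

lemma ennreal_half_le:
  fixes S a :: ennreal
  assumes "a + a \<le> S + S"
  shows "a \<le> S"
  by (meson add_strict_mono assms linorder_not_less)

lemma regimeA:
  assumes L: "L \<in> loss_class" and T: "T \<in> estimators d" and d: "d \<ge> 1"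
    and k: "c / \<phi> \<ge> 0" and x0: "x0 \<ge> 0" "c / \<phi> * (1 / (4 * sqrt d)) \<ge> x0"
    and S: "\<And>P \<sigma> \<theta>. P \<in> noise_class a \<tau> \<Longrightarrow> \<sigma> > 0 \<Longrightarrow> \<theta> \<in> Theta d s \<Longrightarrow> risk L c d T P \<sigma> \<theta> \<phi> \<le> S"
  shows "ennreal (L x0 / 16) \<le> S"
proof -
  define u where "u = 1 / (2 * sqrt d)"
  define p1 where "p1 = (1 - u) / 2"
  define k where "k = c / \<phi>"
  have sd: "sqrt d \<ge> 1" using d by simp
  have u0: "0 < u" "u \<le> 1/2" unfolding u_def using sd by (auto simp: field_simps)
  have p1: "1/4 \<le> p1" "p1 < 1/2" using u0 by (auto simp: p1_def)
  have L0: "L x0 \<ge> 0" using L x0 by (auto simp: loss_class_def)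
  define G where "G = (\<lambda>p y. ennreal (L (k * \<bar>T (restrict y {..<d}) / p - 1\<bar>)))"
  have noise: "Pb (sym3 p (1 / sqrt p)) \<in> noise_class a \<tau>" if "1/4 \<le> p" "p \<le> 1" for p
  proof (rule noise_sym3)
    show "0 < p" "p \<le> 1" using that by auto
    show "p * (1 / sqrt p)\<^sup>2 = 1" using that by (simp add: power_divide)
    have "sqrt (1/4) \<le> sqrt p" using that by (intro real_sqrt_le_mono) auto
    then have "1/2 \<le> sqrt p" by (simp add: real_sqrt_divide)
    moreover have "0 < sqrt p" using that by simp
    ultimately show "\<bar>1 / sqrt p\<bar> \<le> 2" by (simp add: field_simps)
  qed
  have R: "(\<integral>\<^sup>+ y. G p y \<partial>measure_pmf (Q d p)) \<le> S" if "1/4 \<le> p" "p \<le> 1" for p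
  proof -
    have "(\<integral>\<^sup>+ y. G p y \<partial>measure_pmf (Q d p)) = risk L c d T (Pb (sym3 p (1 / sqrt p))) (sqrt p) (theta0 d) \<phi>"
      unfolding G_def k_def using that by (subst risk_A[OF L T k]) auto
    also have "\<dots> \<le> S" using that by (intro S noise theta0_Theta) auto
    finally show ?thesis .
  qed
  have R1: "(\<integral>\<^sup>+ y. G p1 y \<partial>measure_pmf (Q d p1)) \<le> S" using p1 by (intro R) auto
  have R2: "(\<integral>\<^sup>+ y. G (1/2) y \<partial>measure_pmf (Q d (1/2))) \<le> S" by (intro R) auto
  have ov: "(\<integral>\<^sup>+ y. ennreal (3/8) * (indicator (Gset d) y * G p1 y) \<partial>measure_pmf (Q d (1/2)))
      \<le> (\<integral>\<^sup>+ y. G p1 y \<partial>measure_pmf (Q d p1))"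
  proof -
    have pt: "ennreal (pmf (Q d (1/2)) y) * (ennreal (3/8) * (indicator (Gset d) y * G p1 y))
        \<le> ennreal (pmf (Q d p1) y) * G p1 y" for y
    proof (cases "y \<in> Gset d")
      case True
      define N where "N = card {i\<in>{..<d}. y i \<noteq> 0}"
      define M where "M = card {i\<in>{..<d}. y i = 0}"
      have r: "(1 - u) ^ N * (1 + u) ^ M \<ge> 3/8"
        by (intro ratio_bound[OF d u_def]) (use True card_split[of d y] in \<open>auto simp: N_def M_def Gset_def\<close>)
      have e: "pmf (Q d p1) y = (1 - u) ^ N * (1 + u) ^ M * pmf (Q d (1/2)) y"
        unfolding p1_def using u0 by (subst pmf_Q_ratio) (auto simp: prod_ratio N_def M_def)
      have "ennreal (pmf (Q d (1/2)) y) * (ennreal (3/8) * (indicator (Gset d) y * G p1 y))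
           = ennreal (3/8 * pmf (Q d (1/2)) y) * G p1 y"
        using True by (simp add: ennreal_mult'[symmetric] mult_ac)
      also have "\<dots> \<le> ennreal (pmf (Q d p1) y) * G p1 y"
      proof (intro mult_right_mono ennreal_leI)
        have "3/8 * pmf (Q d (1/2)) y \<le> (1 - u) ^ N * (1 + u) ^ M * pmf (Q d (1/2)) y"
          by (rule mult_right_mono[OF r]) simp
        then show "3/8 * pmf (Q d (1/2)) y \<le> pmf (Q d p1) y" using e by simp
      qed simp
      finally show ?thesis .
    qed simp
    show ?thesis
      unfolding nn_integral_measure_pmf by (intro nn_integral_mono pt)
  qed
  have gp: "ennreal (L x0) \<le> G p1 y + G (1/2) y" for y
    unfolding G_def
  proof (rule gap[OF L])
    show "0 < p1" "p1 < 1/2" using p1 by auto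
    show "0 \<le> k" using k by (simp add: k_def)
    show "0 \<le> x0" by (rule x0)
    have "(1/2 - p1) / (2 * (1/2)) = 1 / (4 * sqrt d)" unfolding p1_def u_def using sd by (simp add: field_simps)
    then show "x0 \<le> k * ((1/2 - p1) / (2 * (1/2)))" using x0 by (simp add: k_def)
  qed
  have "ennreal (3/8) * (ennreal (L x0) * emeasure (measure_pmf (Q d (1/2))) (Gset d))
      = (\<integral>\<^sup>+ y. ennreal (3/8) * (indicator (Gset d) y * ennreal (L x0)) \<partial>measure_pmf (Q d (1/2)))"
  proof -
    have "(\<integral>\<^sup>+ y. ennreal (3/8) * (indicator (Gset d) y * ennreal (L x0)) \<partial>measure_pmf (Q d (1/2)))
       = (\<integral>\<^sup>+ y. (ennreal (3/8) * ennreal (L x0)) * indicator (Gset d) y \<partial>measure_pmf (Q d (1/2)))"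
      by (intro nn_integral_cong) (simp add: indicator_def)
    also have "\<dots> = (ennreal (3/8) * ennreal (L x0)) * emeasure (measure_pmf (Q d (1/2))) (Gset d)"
      by (rule nn_integral_cmult_indicator) simp
    finally show ?thesis by (simp only: mult.assoc)
  qed
  also have "\<dots> \<le> (\<integral>\<^sup>+ y. ennreal (3/8) * (indicator (Gset d) y * G p1 y) + ennreal (3/8) * (indicator (Gset d) y * G (1/2) y) \<partial>measure_pmf (Q d (1/2)))"
  proof (intro nn_integral_mono)
    fix y
    have "ennreal (3/8) * (indicator (Gset d) y * ennreal (L x0)) \<le> ennreal (3/8) * (indicator (Gset d) y * (G p1 y + G (1/2) y))"
      using gp[of y] by (intro mult_left_mono) (auto simp: indicator_def)
    then show "ennreal (3/8) * (indicator (Gset d) y * ennreal (L x0)) \<le> ennreal (3/8) * (indicator (Gset d) y * G p1 y) + ennreal (3/8) * (indicator (Gset d) y * G (1/2) y)"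
      by (simp only: distrib_left)
  qed
  also have "\<dots> = (\<integral>\<^sup>+ y. ennreal (3/8) * (indicator (Gset d) y * G p1 y) \<partial>measure_pmf (Q d (1/2)))
      + (\<integral>\<^sup>+ y. ennreal (3/8) * (indicator (Gset d) y * G (1/2) y) \<partial>measure_pmf (Q d (1/2)))"
    by (rule nn_integral_add) simp_all
  also have "\<dots> \<le> S + S"
  proof (rule add_mono)
    show "(\<integral>\<^sup>+ y. ennreal (3/8) * (indicator (Gset d) y * G p1 y) \<partial>measure_pmf (Q d (1/2))) \<le> S"
      using ov R1 by (rule order_trans)
    have "(\<integral>\<^sup>+ y. ennreal (3/8) * (indicator (Gset d) y * G (1/2) y) \<partial>measure_pmf (Q d (1/2)))
        \<le> (\<integral>\<^sup>+ y. G (1/2) y \<partial>measure_pmf (Q d (1/2)))"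
    proof (intro nn_integral_mono)
      fix y
      have "ennreal (3/8) * (indicator (Gset d) y * G (1/2) y) \<le> 1 * (1 * G (1/2) y)"
        by (intro mult_mono) (auto simp: indicator_def ennreal_le_1)
      then show "ennreal (3/8) * (indicator (Gset d) y * G (1/2) y) \<le> G (1/2) y" by simp
    qed
    then show "(\<integral>\<^sup>+ y. ennreal (3/8) * (indicator (Gset d) y * G (1/2) y) \<partial>measure_pmf (Q d (1/2))) \<le> S"
      using R2 by (rule order_trans)
  qed
  finally have main: "ennreal (3/8) * (ennreal (L x0) * emeasure (measure_pmf (Q d (1/2))) (Gset d)) \<le> S + S" .
  have "emeasure (measure_pmf (Q d (1/2))) (Gset d) \<ge> ennreal (1/3)"
    using Gset_prob[OF d] by (simp add: measure_pmf.emeasure_eq_measure ennreal_leI)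
  then have m2: "ennreal (3/8) * (ennreal (L x0) * ennreal (1/3)) \<le> ennreal (3/8) * (ennreal (L x0) * emeasure (measure_pmf (Q d (1/2))) (Gset d))"
    by (intro mult_left_mono) auto
  have eq: "ennreal (3/8) * (ennreal (L x0) * ennreal (1/3)) = ennreal (L x0 / 16) + ennreal (L x0 / 16)"
  proof -
    have a: "ennreal (L x0) * ennreal (1/3) = ennreal (L x0 * (1/3))"
      by (rule ennreal_mult[symmetric]) (use L0 in auto)
    have "ennreal (3/8) * (ennreal (L x0) * ennreal (1/3)) = ennreal (3/8 * (L x0 * (1/3)))"
      unfolding a by (rule ennreal_mult[symmetric]) (use L0 in auto)
    also have "3/8 * (L x0 * (1/3)) = L x0 / 16 + L x0 / 16" by simp
    also have "ennreal (L x0 / 16 + L x0 / 16) = ennreal (L x0 / 16) + ennreal (L x0 / 16)"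
      using L0 by (intro ennreal_plus) auto
    finally show ?thesis .
  qed
  from m2 main have "ennreal (3/8) * (ennreal (L x0) * ennreal (1/3)) \<le> S + S" by (rule order_trans)
  then have "ennreal (L x0 / 16) + ennreal (L x0 / 16) \<le> S + S" unfolding eq .
  then show ?thesis by (rule ennreal_half_le)
qed

lemma exp_bind:
  fixes f :: "'b \<Rightarrow> real"
  assumes "finite (set_pmf M)" "\<And>x. x \<in> set_pmf M \<Longrightarrow> finite (set_pmf (N x))"
  shows "measure_pmf.expectation (bind_pmf M N) f = measure_pmf.expectation M (\<lambda>x. measure_pmf.expectation (N x) f)"
proof -
  have "measure_pmf.expectation (bind_pmf M N) f = (\<Sum>a\<in>set_pmf M. pmf M a *\<^sub>R measure_pmf.expectation (N a) f)"
    by (rule pmf_expectation_bind) (use assms in auto)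
  also have "\<dots> = measure_pmf.expectation M (\<lambda>x. measure_pmf.expectation (N x) f)"
    by (rule integral_measure_pmf[symmetric]) (use assms in auto)
  finally show ?thesis .
qed

definition conv :: "real \<Rightarrow> real \<Rightarrow> real pmf" where
  "conv q H = bind_pmf (sym3 q H) (\<lambda>e. map_pmf (\<lambda>z. e + z) (sym3 (1/2) 1))"

lemma finite_conv: "finite (set_pmf (conv q H))"
proof -
  have "set_pmf (conv q H) \<subseteq> (\<Union>e\<in>{H, -H, 0}. (\<lambda>z. e + z) ` {1, -1, 0})"
    unfolding conv_def by (auto dest!: subsetD[OF set_sym3[of q H]] subsetD[OF set_sym3[of "1/2" 1]])
  then show ?thesis by (rule finite_subset) auto
qed

lemma exp_conv:
  assumes "0 \<le> q" "q \<le> 1"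
  shows "measure_pmf.expectation (conv q H) g =
    q * ((1/2 * (g (H + 1) + g (H + -1)) / 2 + 1/2 * g (H + 0)) + (1/2 * (g (-H + 1) + g (-H + -1)) / 2 + 1/2 * g (-H + 0))) / 2
    + (1 - q) * (1/2 * (g (0 + 1) + g (0 + -1)) / 2 + 1/2 * g (0 + 0))"
proof -
  have "measure_pmf.expectation (conv q H) g = measure_pmf.expectation (sym3 q H)
      (\<lambda>e. measure_pmf.expectation (map_pmf (\<lambda>z. e + z) (sym3 (1/2) 1)) g)"
    unfolding conv_def by (rule exp_bind) (auto simp: finite_sym3)
  also have "\<dots> = measure_pmf.expectation (sym3 q H) (\<lambda>e. measure_pmf.expectation (sym3 (1/2) 1) (\<lambda>z. g (e + z)))"
    by simp
  also have "\<dots> = q * ((1/2 * (g (H + 1) + g (H + -1)) / 2 + 1/2 * g (H + 0)) + (1/2 * (g (-H + 1) + g (-H + -1)) / 2 + 1/2 * g (-H + 0))) / 2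
    + (1 - q) * (1/2 * (g (0 + 1) + g (0 + -1)) / 2 + 1/2 * g (0 + 0))"
    using assms by (simp only: exp_sym3) simp_all
  finally show ?thesis .
qed

definition sA :: "real \<Rightarrow> real \<Rightarrow> real" where "sA q H = sqrt (1/2 + q * H\<^sup>2)"
definition xiA :: "real \<Rightarrow> real \<Rightarrow> real pmf" where "xiA q H = map_pmf (\<lambda>y. y / sA q H) (conv q H)"

lemma sA_pos: "0 \<le> q \<Longrightarrow> sA q H > 0"
  unfolding sA_def by (intro real_sqrt_gt_zero) (simp add: add_pos_nonneg)

lemma sA_ge: "0 \<le> q \<Longrightarrow> 2 * sA q H > 1"
proof -
  assume q: "0 \<le> q"
  have "sqrt (1/4) < sqrt (1/2 + q * H\<^sup>2)" using q by (intro real_sqrt_less_mono) (simp add: add_pos_nonneg)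
  then show ?thesis by (simp add: sA_def real_sqrt_divide)
qed

lemma sA_sq: "0 \<le> q \<Longrightarrow> (sA q H)\<^sup>2 = 1/2 + q * H\<^sup>2"
  unfolding sA_def by (simp add: add_nonneg_nonneg)

lemma noise_A:
  assumes q: "0 \<le> q" "q \<le> 1" and H: "H \<ge> 0"
    and tl: "\<And>t. t \<ge> 2 \<Longrightarrow> t * sA q H < H + 1 \<Longrightarrow> q \<le> (\<tau> / t) powr a"
  shows "Pb (xiA q H) \<in> noise_class a \<tau>"
proof (rule noise_Pb)
  define \<sigma> where "\<sigma> = sA q H"
  have s0: "\<sigma> > 0" using sA_pos[OF q(1)] by (simp add: \<sigma>_def)
  have s1: "2 * \<sigma> > 1" using sA_ge[OF q(1)] by (simp add: \<sigma>_def)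
  have s2: "\<sigma>\<^sup>2 = 1/2 + q * H\<^sup>2" using sA_sq[OF q(1)] by (simp add: \<sigma>_def)
  show "finite (set_pmf (xiA q H))" unfolding xiA_def by (simp add: finite_conv)
  show "measure_pmf.expectation (xiA q H) (\<lambda>x. x) = 0"
    unfolding xiA_def using q by (simp add: exp_conv \<sigma>_def[symmetric] field_simps)
  show "measure_pmf.expectation (xiA q H) (\<lambda>x. x\<^sup>2) = 1"
  proof -
    have "measure_pmf.expectation (xiA q H) (\<lambda>x. x\<^sup>2) = (1/2 + q * H\<^sup>2) / \<sigma>\<^sup>2"
      unfolding xiA_def using q s0 by (simp add: exp_conv \<sigma>_def[symmetric] power_divide field_simps power2_eq_square)
    moreover have "1/2 + q * H\<^sup>2 > 0" using q by (simp add: add_pos_nonneg)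
    ultimately show ?thesis using s2 by simp
  qed
  show "\<forall>t\<ge>2. measure_pmf.prob (xiA q H) {x. \<bar>x\<bar> > t} \<le> (\<tau> / t) powr a"
  proof (intro allI impI)
    fix t :: real assume t: "t \<ge> 2"
    define I where "I = (\<lambda>y::real. indicator {x::real. \<bar>x\<bar> > t} (y / \<sigma>) :: real)"
    have I01: "0 \<le> I y" "I y \<le> 1" for y by (auto simp: I_def indicator_def)
    have Ismall: "I y = 0" if "\<bar>y\<bar> \<le> 1" for y
    proof -
      have "\<bar>y / \<sigma>\<bar> = \<bar>y\<bar> / \<sigma>" using s0 by (simp add: abs_div)
      also have "\<dots> \<le> 1 / \<sigma>" using that s0 by (intro divide_right_mono) auto
      also have "\<dots> < 2" using s1 s0 by (simp add: field_simps)
      finally show ?thesis using t by (auto simp: I_def indicator_def)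
    qed
    have "measure_pmf.prob (xiA q H) {x. \<bar>x\<bar> > t} = measure_pmf.expectation (xiA q H) (indicator {x. \<bar>x\<bar> > t})"
      by (rule prob_pmf_exp)
    also have "\<dots> = measure_pmf.expectation (conv q H) I"
      unfolding xiA_def I_def \<sigma>_def by (rule integral_map_pmf)
    also have "\<dots> = q * ((1/2 * (I (H + 1) + I (H + -1)) / 2 + 1/2 * I (H + 0)) + (1/2 * (I (-H + 1) + I (-H + -1)) / 2 + 1/2 * I (-H + 0))) / 2
      + (1 - q) * (1/2 * (I (0 + 1) + I (0 + -1)) / 2 + 1/2 * I (0 + 0))"
      by (rule exp_conv[OF q])
    also have "\<dots> = q * ((1/2 * (I (H + 1) + I (H + -1)) / 2 + 1/2 * I H) + (1/2 * (I (-H + 1) + I (-H + -1)) / 2 + 1/2 * I (-H))) / 2"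
      by (simp add: Ismall)
    finally have e: "measure_pmf.prob (xiA q H) {x. \<bar>x\<bar> > t} = \<dots>" .
    show "measure_pmf.prob (xiA q H) {x. \<bar>x\<bar> > t} \<le> (\<tau> / t) powr a"
    proof (cases "t * \<sigma> < H + 1")
      case True
      have "measure_pmf.prob (xiA q H) {x. \<bar>x\<bar> > t} \<le> q * ((1/2 * (1 + 1) / 2 + 1/2 * 1) + (1/2 * (1 + 1) / 2 + 1/2 * 1)) / 2"
        unfolding e using q I01
        by (intro divide_right_mono mult_left_mono add_mono) auto
      also have "\<dots> = q" by simp
      also have "\<dots> \<le> (\<tau> / t) powr a" using tl[OF t] True by (simp add: \<sigma>_def)
      finally show ?thesis .
    next
      case False
      have Ibig: "I y = 0" if "\<bar>y\<bar> \<le> H + 1" for y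
      proof -
        have "\<bar>y / \<sigma>\<bar> = \<bar>y\<bar> / \<sigma>" using s0 by (simp add: abs_div)
        also have "\<dots> \<le> (H + 1) / \<sigma>" using that s0 by (intro divide_right_mono) auto
        also have "\<dots> \<le> t" using False s0 by (simp add: field_simps)
        finally show ?thesis by (auto simp: I_def indicator_def)
      qed
      have "measure_pmf.prob (xiA q H) {x. \<bar>x\<bar> > t} = 0"
        unfolding e using H by (simp add: Ibig)
      then show ?thesis by simp
    qed
  qed
qed

lemma risk_Adecomp:
  assumes L: "L \<in> loss_class" and T: "T \<in> estimators d" and k: "c / \<phi> \<ge> 0" and q: "0 \<le> q"
  shows "risk L c d T (Pb (xiA q H)) (sA q H) (theta0 d) \<phi> =
    (\<integral>\<^sup>+\<theta>. (\<integral>\<^sup>+ f. ennreal (L (c / \<phi> * \<bar>T (obs d \<theta> (sqrt (1/2)) f) / (sA q H)\<^sup>2 - 1\<bar>))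
        \<partial>measure_pmf (Pi_pmf {..<d} 0 (\<lambda>_. sym3 (1/2) (sqrt 2)))) \<partial>measure_pmf (Pi_pmf {..<d} undefined (\<lambda>_. sym3 q H)))"
proof -
  define \<sigma> where "\<sigma> = sA q H"
  have s0: "\<sigma> > 0" using sA_pos[OF q] by (simp add: \<sigma>_def)
  define F where "F = (\<lambda>y. ennreal (L (c / \<phi> * \<bar>T y / \<sigma>\<^sup>2 - 1\<bar>)))"
  have e1: "Pi_pmf {..<d} 0 (\<lambda>_. xiA q H) = map_pmf (\<lambda>h. (\<lambda>y. y / \<sigma>) \<circ> h) (Pi_pmf {..<d} 0 (\<lambda>_. conv q H))"
    unfolding xiA_def \<sigma>_def by (rule Pi_pmf_map) auto
  have e2: "Pi_pmf {..<d} 0 (\<lambda>_. conv q H) =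
      bind_pmf (Pi_pmf {..<d} undefined (\<lambda>_. sym3 q H)) (\<lambda>\<theta>. Pi_pmf {..<d} 0 (\<lambda>i. map_pmf (\<lambda>z. \<theta> i + z) (sym3 (1/2) 1)))"
    unfolding conv_def by (rule Pi_pmf_bind) auto
  have e3: "Pi_pmf {..<d} 0 (\<lambda>i. map_pmf (\<lambda>z. \<theta> i + z) (sym3 (1/2) 1)) =
      map_pmf (\<lambda>f i. if i \<in> {..<d} then \<theta> i + sqrt (1/2) * f i else 0) (Pi_pmf {..<d} 0 (\<lambda>_. sym3 (1/2) (sqrt 2)))" for \<theta>
  proof -
    have "sym3 (1/2) 1 = map_pmf (\<lambda>x. sqrt (1/2) * x) (sym3 (1/2) (sqrt 2))"
      by (simp add: map_sym3_scale real_sqrt_mult[symmetric])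
    then have "Pi_pmf {..<d} 0 (\<lambda>i. map_pmf (\<lambda>z. \<theta> i + z) (sym3 (1/2) 1)) =
       Pi_pmf {..<d} 0 (\<lambda>i. map_pmf (\<lambda>x. \<theta> i + sqrt (1/2) * x) (sym3 (1/2) (sqrt 2)))"
      by (simp add: map_pmf_comp)
    also have "\<dots> = map_pmf (\<lambda>f i. if i \<in> {..<d} then \<theta> i + sqrt (1/2) * f i else 0) (Pi_pmf {..<d} 0 (\<lambda>_. sym3 (1/2) (sqrt 2)))"
      by (rule Pi_pmf_map') auto
    finally show ?thesis .
  qed
  have o1: "obs d (theta0 d) \<sigma> ((\<lambda>y. y / \<sigma>) \<circ> h) = restrict h {..<d}" for h
    unfolding obs_def theta0_def using s0 by auto
  have o2: "restrict (\<lambda>i. if i \<in> {..<d} then \<theta> i + sqrt (1/2) * f i else 0) {..<d} = obs d \<theta> (sqrt (1/2)) f" for \<theta> f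
    unfolding obs_def by auto
  have "risk L c d T (Pb (xiA q H)) (sA q H) (theta0 d) \<phi> =
      (\<integral>\<^sup>+ f. F (obs d (theta0 d) \<sigma> f) \<partial>measure_pmf (Pi_pmf {..<d} 0 (\<lambda>_. xiA q H)))"
    unfolding F_def \<sigma>_def by (rule risk_Pb[OF L T k])
  also have "\<dots> = (\<integral>\<^sup>+ h. F (restrict h {..<d}) \<partial>measure_pmf (Pi_pmf {..<d} 0 (\<lambda>_. conv q H)))"
    unfolding e1 nn_integral_map_pmf o1 ..
  also have "\<dots> = (\<integral>\<^sup>+\<theta>. (\<integral>\<^sup>+ f. F (obs d \<theta> (sqrt (1/2)) f)
        \<partial>measure_pmf (Pi_pmf {..<d} 0 (\<lambda>_. sym3 (1/2) (sqrt 2)))) \<partial>measure_pmf (Pi_pmf {..<d} undefined (\<lambda>_. sym3 q H)))"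
    unfolding e2 nn_integral_bind_pmf e3 nn_integral_map_pmf o2 ..
  finally show ?thesis unfolding F_def \<sigma>_def .
qed

lemma set_Pi_theta: "\<theta> \<in> set_pmf (Pi_pmf {..<(d::nat)} undefined (\<lambda>_. sym3 q H)) \<Longrightarrow> \<theta> \<in> extensional {..<d}"
proof -
  assume a: "\<theta> \<in> set_pmf (Pi_pmf {..<d} undefined (\<lambda>_. sym3 q H))"
  then show ?thesis by (simp add: set_Pi_pmf PiE_dflt_def extensional_def)
qed

lemma Theta_I: "\<theta> \<in> extensional {..<d} \<Longrightarrow> card {i\<in>{..<d}. \<theta> i \<noteq> 0} \<le> s \<Longrightarrow> \<theta> \<in> Theta d s"
  by (simp add: Theta_def)

lemma count_prob:
  assumes q: "0 \<le> q" "q \<le> 1" and H: "H \<noteq> 0" and s: "real d * q \<le> real s / 2"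
  shows "measure_pmf.prob (Pi_pmf {..<d} dd (\<lambda>_. sym3 q H)) {\<theta>. card {i\<in>{..<d}. \<theta> i \<noteq> 0} \<le> s} \<ge> 1/2"
proof -
  define M where "M = Pi_pmf {..<d} dd (\<lambda>_. sym3 q H)"
  define u where "u = (\<lambda>\<theta>::nat\<Rightarrow>real. \<Sum>i\<in>{..<d}. (if \<theta> i \<noteq> 0 then 1 else 0 :: real))"
  have u: "u \<theta> = real (card {i\<in>{..<d}. \<theta> i \<noteq> 0})" for \<theta>
  proof -
    have "u \<theta> = (\<Sum>i\<in>{i\<in>{..<d}. \<theta> i \<noteq> 0}. 1)"
      unfolding u_def by (rule sum.mono_neutral_cong_right) auto
    then show ?thesis by simp
  qed
  have int: "integrable (measure_pmf M) u"
    unfolding u_def M_def by (rule integrable_sum_Pi_pmf) (auto intro: integrable_measure_pmf_finite finite_sym3)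
  have Eu: "measure_pmf.expectation M u = real d * q"
  proof -
    have "measure_pmf.expectation M u = (\<Sum>i\<in>{..<d}. measure_pmf.expectation (sym3 q H) (\<lambda>x. if x \<noteq> 0 then 1 else 0 :: real))"
      unfolding u_def M_def by (rule expectation_sum_Pi_pmf) (auto intro: integrable_measure_pmf_finite finite_sym3)
    also have "\<dots> = real d * q" using q H by (simp add: exp_sym3)
    finally show ?thesis .
  qed
  have "measure_pmf.prob M {\<theta>\<in>space M. u \<theta> \<ge> real s + 1} \<le> measure_pmf.expectation M u / (real s + 1)"
    by (rule integral_Markov_inequality_measure[OF int, of UNIV]) (auto simp: u_def intro!: sum_nonneg)
  also have "\<dots> \<le> 1/2" using s q unfolding Eu by (simp add: field_simps)
  finally have mk: "measure_pmf.prob M {\<theta>\<in>space M. u \<theta> \<ge> real s + 1} \<le> 1/2" .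
  have "{\<theta>. card {i\<in>{..<d}. \<theta> i \<noteq> 0} \<le> s} = space M - {\<theta>\<in>space M. u \<theta> \<ge> real s + 1}"
    by (auto simp: u)
  then have "measure_pmf.prob M {\<theta>. card {i\<in>{..<d}. \<theta> i \<noteq> 0} \<le> s} = 1 - measure_pmf.prob M {\<theta>\<in>space M. u \<theta> \<ge> real s + 1}"
    using measure_pmf.prob_compl[of "{\<theta>\<in>space M. u \<theta> \<ge> real s + 1}" M] by simp
  then show ?thesis using mk by (simp add: M_def)
qed

lemma regimeB:
  assumes L: "L \<in> loss_class" and T: "T \<in> estimators d"
    and k: "c / \<phi> \<ge> 0" and x0: "x0 \<ge> 0"
    and q: "0 < q" "q \<le> 1" and H: "H > 0" and cnt: "real d * q \<le> real s / 2"
    and tl: "\<And>t. t \<ge> 2 \<Longrightarrow> t * sA q H < H + 1 \<Longrightarrow> q \<le> (\<tau> / t) powr a"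
    and gp: "c / \<phi> * ((q * H\<^sup>2) / (2 * (1/2 + q * H\<^sup>2))) \<ge> x0"
    and S: "\<And>P \<sigma> \<theta>. P \<in> noise_class a \<tau> \<Longrightarrow> \<sigma> > 0 \<Longrightarrow> \<theta> \<in> Theta d s \<Longrightarrow> risk L c d T P \<sigma> \<theta> \<phi> \<le> S"
  shows "ennreal (L x0 / 4) \<le> S"
proof -
  define M where "M = Pi_pmf {..<d} undefined (\<lambda>_. sym3 q H)"
  define Mb where "Mb = Pi_pmf {..<d} 0 (\<lambda>_. sym3 (1/2) (sqrt 2))"
  define FA where "FA = (\<lambda>y. ennreal (L (c / \<phi> * \<bar>T y / (sA q H)\<^sup>2 - 1\<bar>)))"
  define FB where "FB = (\<lambda>y. ennreal (L (c / \<phi> * \<bar>T y / (sqrt (1/2))\<^sup>2 - 1\<bar>)))"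
  define IA where "IA = (\<lambda>\<theta>. \<integral>\<^sup>+ f. FA (obs d \<theta> (sqrt (1/2)) f) \<partial>measure_pmf Mb)"
  define IB where "IB = (\<lambda>\<theta>. \<integral>\<^sup>+ f. FB (obs d \<theta> (sqrt (1/2)) f) \<partial>measure_pmf Mb)"
  define K where "K = {\<theta>::nat\<Rightarrow>real. card {i\<in>{..<d}. \<theta> i \<noteq> 0} \<le> s}"
  have L0: "L x0 \<ge> 0" using L x0 by (auto simp: loss_class_def)
  have RA: "(\<integral>\<^sup>+\<theta>. IA \<theta> \<partial>measure_pmf M) \<le> S"
  proof -
    have "(\<integral>\<^sup>+\<theta>. IA \<theta> \<partial>measure_pmf M) = risk L c d T (Pb (xiA q H)) (sA q H) (theta0 d) \<phi>"
      unfolding IA_def FA_def M_def Mb_def using q by (subst risk_Adecomp[OF L T k]) auto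
    also have "\<dots> \<le> S"
      using q H by (intro S noise_A theta0_Theta sA_pos tl) auto
    finally show ?thesis .
  qed
  have RB: "IB \<theta> \<le> S" if "\<theta> \<in> set_pmf M" "\<theta> \<in> K" for \<theta>
  proof -
    have "IB \<theta> = risk L c d T (Pb (sym3 (1/2) (sqrt 2))) (sqrt (1/2)) \<theta> \<phi>"
      unfolding IB_def FB_def Mb_def by (subst risk_Pb[OF L T k]) auto
    also have "\<dots> \<le> S"
    proof (rule S)
      have "sqrt 2 \<le> (2::real)" by (subst real_sqrt_le_iff') auto
      then show "Pb (sym3 (1/2) (sqrt 2)) \<in> noise_class a \<tau>" by (intro noise_sym3) auto
      show "sqrt (1/2) > (0::real)" by simp
      show "\<theta> \<in> Theta d s" using that set_Pi_theta[of \<theta> d q H] by (intro Theta_I) (auto simp: M_def K_def)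
    qed
    finally show ?thesis .
  qed
  have pi: "emeasure (measure_pmf M) K \<ge> ennreal (1/2)"
  proof -
    have p: "1/2 \<le> measure_pmf.prob M K" unfolding M_def K_def by (rule count_prob) (use q H cnt in auto)
    have "emeasure (measure_pmf M) K = ennreal (measure_pmf.prob M K)" by (rule measure_pmf.emeasure_eq_measure)
    then show ?thesis using p by (simp only:) (rule ennreal_leI)
  qed
  have gap': "ennreal (L x0) \<le> FA y + FB y" for y
  proof -
    have "ennreal (L x0) \<le> ennreal (L (c / \<phi> * \<bar>T y / (sqrt (1/2))\<^sup>2 - 1\<bar>)) + ennreal (L (c / \<phi> * \<bar>T y / (sA q H)\<^sup>2 - 1\<bar>))"
    proof (rule gap[OF L])
      show "0 < (sqrt (1/2::real))\<^sup>2" by simp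
      show "(sqrt (1/2::real))\<^sup>2 < (sA q H)\<^sup>2" using q H by (simp add: sA_sq)
      show "0 \<le> c / \<phi>" by (rule k)
      show "0 \<le> x0" by (rule x0)
      show "x0 \<le> c / \<phi> * (((sA q H)\<^sup>2 - (sqrt (1/2))\<^sup>2) / (2 * (sA q H)\<^sup>2))"
        using gp q by (simp add: sA_sq)
    qed
    then show ?thesis unfolding FA_def FB_def by (simp add: add.commute)
  qed
  have IAB: "ennreal (L x0) \<le> IA \<theta> + IB \<theta>" for \<theta>
  proof -
    have "IA \<theta> + IB \<theta> = (\<integral>\<^sup>+ f. FA (obs d \<theta> (sqrt (1/2)) f) + FB (obs d \<theta> (sqrt (1/2)) f) \<partial>measure_pmf Mb)"
      unfolding IA_def IB_def by (rule nn_integral_add[symmetric]) simp_all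
    also have "\<dots> \<ge> (\<integral>\<^sup>+ f. ennreal (L x0) \<partial>measure_pmf Mb)"
      by (intro nn_integral_mono gap')
    finally show ?thesis by simp
  qed
  have "ennreal (L x0) * ennreal (1/2) \<le> ennreal (L x0) * emeasure (measure_pmf M) K"
    using pi by (intro mult_left_mono) auto
  also have "\<dots> = (\<integral>\<^sup>+\<theta>. ennreal (L x0) * indicator K \<theta> \<partial>measure_pmf M)"
    by (rule nn_integral_cmult_indicator[symmetric]) simp
  also have "\<dots> \<le> (\<integral>\<^sup>+\<theta>. IA \<theta> + S * indicator K \<theta> \<partial>measure_pmf M)"
  proof (rule nn_integral_mono_AE, rule AE_pmfI)
    fix \<theta> assume th: "\<theta> \<in> set_pmf M"
    show "ennreal (L x0) * indicator K \<theta> \<le> IA \<theta> + S * indicator K \<theta>"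
    proof (cases "\<theta> \<in> K")
      case True
      have "ennreal (L x0) \<le> IA \<theta> + IB \<theta>" by (rule IAB)
      also have "\<dots> \<le> IA \<theta> + S" using RB[OF th True] by (rule add_left_mono)
      finally show ?thesis using True by simp
    qed simp
  qed
  also have "\<dots> = (\<integral>\<^sup>+\<theta>. IA \<theta> \<partial>measure_pmf M) + (\<integral>\<^sup>+\<theta>. S * indicator K \<theta> \<partial>measure_pmf M)"
    by (rule nn_integral_add) simp_all
  also have "(\<integral>\<^sup>+\<theta>. S * indicator K \<theta> \<partial>measure_pmf M) = S * emeasure (measure_pmf M) K"
    by (rule nn_integral_cmult_indicator) simp
  also have "\<dots> \<le> S * 1"
    by (intro mult_left_mono) (auto simp: measure_pmf.emeasure_le_1)
  finally have main: "ennreal (L x0) * ennreal (1/2) \<le> S + S" using RA by (auto elim: order_trans intro: add_mono)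
  have eq: "ennreal (L x0) * ennreal (1/2) = ennreal (L x0 / 4) + ennreal (L x0 / 4)"
  proof -
    have "ennreal (L x0) * ennreal (1/2) = ennreal (L x0 * (1/2))"
      by (rule ennreal_mult[symmetric]) (use L0 in auto)
    also have "L x0 * (1/2) = L x0 / 4 + L x0 / 4" by simp
    also have "ennreal (L x0 / 4 + L x0 / 4) = ennreal (L x0 / 4) + ennreal (L x0 / 4)"
      using L0 by (intro ennreal_plus) auto
    finally show ?thesis .
  qed
  from main have "ennreal (L x0 / 4) + ennreal (L x0 / 4) \<le> S + S" unfolding eq .
  then show ?thesis by (rule ennreal_half_le)
qed

lemma regimeB_params:
  fixes a \<tau> kk :: real and s d :: nat
  assumes a: "a \<ge> 2" and sd: "1 \<le> s" "s \<le> d"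
    and kk: "0 < kk" "kk \<le> 2/5" "kk \<le> \<tau> / 7"
  defines "q \<equiv> real s / (2 * real d)"
  defines "H \<equiv> kk / q powr (1 / a)"
  shows "0 < q" "q \<le> 1" "H > 0" "real d * q \<le> real s / 2"
    and "\<And>t. t \<ge> 2 \<Longrightarrow> t * sA q H < H + 1 \<Longrightarrow> q \<le> (\<tau> / t) powr a"
    and "q * H\<^sup>2 \<ge> kk\<^sup>2 * (real s / real d) powr (1 - 2 / a) / 2"
    and "q * H\<^sup>2 \<le> 1"
proof -
  have d0: "real d > 0" using sd by simp
  show q0: "0 < q" unfolding q_def using sd by simp
  show q1: "q \<le> 1" unfolding q_def using sd d0 by (simp add: field_simps)
  define w where "w = q powr (1 / a)"
  have w0: "w > 0" using q0 by (simp add: w_def)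
  have Hw: "H = kk / w" by (simp add: H_def w_def)
  show H0: "H > 0" using kk w0 Hw by simp
  show "real d * q \<le> real s / 2" unfolding q_def using d0 by simp
  have wa: "w powr a = q" unfolding w_def using a q0 by (simp add: powr_powr)
  have qw: "q / w\<^sup>2 = q powr (1 - 2 / a)"
  proof -
    have "w\<^sup>2 = q powr (2 / a)" unfolding w_def power2_eq_square by (simp add: powr_add[symmetric])
    then show ?thesis using q0 by (simp add: powr_diff)
  qed
  have qH: "q * H\<^sup>2 = kk\<^sup>2 * q powr (1 - 2 / a)"
    unfolding Hw qw[symmetric] by (simp add: power_divide)
  have b0: "0 \<le> 1 - 2 / a" "1 - 2 / a \<le> 1" using a by (auto simp: field_simps)
  show "q * H\<^sup>2 \<le> 1"
  proof -
    have "q powr (1 - 2 / a) \<le> 1" using q0 q1 b0 by (intro powr_le1) auto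
    moreover have "kk\<^sup>2 \<le> 1" using kk by (simp add: power2_eq_square mult_le_one)
    ultimately have "kk\<^sup>2 * q powr (1 - 2 / a) \<le> 1 * 1" by (intro mult_mono) auto
    then show ?thesis using qH by simp
  qed
  show "q * H\<^sup>2 \<ge> kk\<^sup>2 * (real s / real d) powr (1 - 2 / a) / 2"
  proof -
    have "q powr (1 - 2 / a) = (real s / real d) powr (1 - 2 / a) * (1/2) powr (1 - 2 / a)"
      unfolding q_def by (simp add: powr_mult[symmetric] field_simps)
    moreover have "(1/2::real) powr 1 \<le> (1/2) powr (1 - 2 / a)" using b0 by (intro powr_mono') auto
    moreover have "(1/2::real) powr 1 = 1/2" by simp
    ultimately have "(real s / real d) powr (1 - 2 / a) * (1/2) \<le> (real s / real d) powr (1 - 2 / a) * (1/2) powr (1 - 2 / a)"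
      by (intro mult_left_mono) auto
    then have "q powr (1 - 2 / a) \<ge> (real s / real d) powr (1 - 2 / a) * (1/2)"
      using \<open>q powr (1 - 2 / a) = _\<close> by simp
    then have "kk\<^sup>2 * ((real s / real d) powr (1 - 2 / a) * (1/2)) \<le> kk\<^sup>2 * q powr (1 - 2 / a)"
      by (intro mult_left_mono) auto
    then show ?thesis unfolding qH by simp
  qed
  fix t :: real assume t: "t \<ge> 2" and tl: "t * sA q H < H + 1"
  have sA2: "(sA q H)\<^sup>2 \<ge> 1/2" using sA_sq[of q H] q0 by simp
  have sA0: "sA q H > 0" using sA_pos[of q H] q0 by simp
  have "(t * sA q H)\<^sup>2 < (H + 1)\<^sup>2" using tl t sA0 by (intro power_strict_mono) auto
  moreover have "(t * sA q H)\<^sup>2 \<ge> 4 * (1/2)"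
  proof -
    have t2: "4 \<le> t\<^sup>2" using mult_mono[of 2 t 2 t] t by (simp add: power2_eq_square)
    show ?thesis unfolding power_mult_distrib using t2 sA2 by (intro mult_mono) auto
  qed
  ultimately have HH: "(H + 1)\<^sup>2 > 2" by simp
  have Hbig: "H > 2/5"
  proof (rule ccontr)
    assume "\<not> H > 2/5"
    then have "(H + 1)\<^sup>2 \<le> (7/5)\<^sup>2" using H0 by (intro power_mono) auto
    then show False using HH by (simp add: power2_eq_square)
  qed
  have "t * sA q H < (7/2) * H" using tl Hbig by simp
  moreover have "sA q H \<ge> 1/2" using sA_ge[of q H] q0 by simp
  ultimately have "t * (1/2) < (7/2) * H" using t by (smt (verit) mult_left_mono)
  then have tH: "t < 7 * H" by simp
  have "7 * H \<le> \<tau> / w" unfolding Hw using kk w0 by (simp add: field_simps)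
  with tH have "t < \<tau> / w" by simp
  then have "w < \<tau> / t" using t w0 by (simp add: field_simps)
  then have "w powr a \<le> (\<tau> / t) powr a" using w0 a by (intro powr_mono2) auto
  then show "q \<le> (\<tau> / t) powr a" using wa by simp
qed

theorem theorem6:
  fixes \<tau> a :: real and L :: "real \<Rightarrow> real"
  assumes "\<tau> > 0" and "a \<ge> 2" and "L \<in> loss_class"
  shows "\<exists>c>0. \<exists>c'>0. \<forall>s d :: nat. 1 \<le> s \<and> s \<le> d \<longrightarrow>
    (INF T\<in>estimators d. SUP P\<in>noise_class a \<tau>. SUP \<sigma>\<in>{0<..}. SUP \<theta>\<in>Theta d s.
        risk L c d T P \<sigma> \<theta> (phi_pol a s d)) \<ge> ennreal c'"
proof -
  note L = assms(3)
  have ta: "\<tau> > 0" "a \<ge> 2" using assms by auto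
  obtain x0 where x0: "x0 \<ge> 0" "L x0 \<noteq> 0" using L by (auto simp: loss_class_def)
  have L0: "L 0 = 0" and Lnn: "\<And>x. x \<ge> 0 \<Longrightarrow> L x \<ge> 0" using L by (auto simp: loss_class_def)
  have x0p: "x0 > 0" using x0 L0 by (cases "x0 = 0") auto
  have Lx0: "L x0 > 0" using x0 Lnn[of x0] by simp
  define kk where "kk = min (2/5) (\<tau> / 7)"
  have kk: "0 < kk" "kk \<le> 2/5" "kk \<le> \<tau> / 7" using ta by (auto simp: kk_def)
  define c where "c = 4 * x0 + 6 * x0 / kk\<^sup>2"
  have c4: "c \<ge> 4 * x0" using x0p kk by (simp add: c_def)
  have c6: "c \<ge> 6 * x0 / kk\<^sup>2" using x0p kk by (simp add: c_def)
  have c0: "c > 0" using c4 x0p by simp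
  have main: "\<forall>s d :: nat. 1 \<le> s \<and> s \<le> d \<longrightarrow>
    (INF T\<in>estimators d. SUP P\<in>noise_class a \<tau>. SUP \<sigma>\<in>{0<..}. SUP \<theta>\<in>Theta d s.
        risk L c d T P \<sigma> \<theta> (phi_pol a s d)) \<ge> ennreal (L x0 / 16)"
  proof (intro allI impI)
    fix s d :: nat assume sd: "1 \<le> s \<and> s \<le> d"
    define \<phi> where "\<phi> = phi_pol a s d"
    define \<beta> where "\<beta> = 1 - 2 / a"
    have d1: "d \<ge> 1" using sd by simp
    have sq: "sqrt (real d) > 0" using d1 by simp
    have \<phi>ge: "\<phi> \<ge> 1 / sqrt d" "\<phi> \<ge> (real s / real d) powr \<beta>"
      by (auto simp: \<phi>_def phi_pol_def \<beta>_def)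
    have \<phi>0: "\<phi> > 0" using \<phi>ge(1) sq by (smt (verit) divide_pos_pos)
    have k: "c / \<phi> \<ge> 0" using c0 \<phi>0 by simp
    show "ennreal (L x0 / 16) \<le> (INF T\<in>estimators d. SUP P\<in>noise_class a \<tau>. SUP \<sigma>\<in>{0<..}. SUP \<theta>\<in>Theta d s.
        risk L c d T P \<sigma> \<theta> (phi_pol a s d))"
    proof (rule INF_greatest)
      fix T assume T: "T \<in> estimators d"
      define S where "S = (SUP P\<in>noise_class a \<tau>. SUP \<sigma>\<in>{0<..}. SUP \<theta>\<in>Theta d s. risk L c d T P \<sigma> \<theta> \<phi>)"
      have Sup: "risk L c d T P \<sigma> \<theta> \<phi> \<le> S" if "P \<in> noise_class a \<tau>" "\<sigma> > 0" "\<theta> \<in> Theta d s" for P \<sigma> \<theta>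
        unfolding S_def
        by (rule SUP_upper2[OF that(1)], rule SUP_upper2[of \<sigma>], use that in simp, rule SUP_upper[OF that(3)])
      have "ennreal (L x0 / 16) \<le> S"
      proof (cases "(real s / real d) powr \<beta> \<le> 1 / sqrt d")
        case True
        then have \<phi>e: "\<phi> = 1 / sqrt d" by (simp add: \<phi>_def phi_pol_def \<beta>_def)
        show ?thesis
        proof (rule regimeA[OF L T d1 k x0(1)])
          show "x0 \<le> c / \<phi> * (1 / (4 * sqrt (real d)))" using c4 sq by (simp add: \<phi>e)
          show "\<And>P \<sigma> \<theta>. P \<in> noise_class a \<tau> \<Longrightarrow> 0 < \<sigma> \<Longrightarrow> \<theta> \<in> Theta d s \<Longrightarrow> risk L c d T P \<sigma> \<theta> \<phi> \<le> S"
            by (rule Sup)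
        qed
      next
        case False
        then have \<phi>e: "\<phi> = (real s / real d) powr \<beta>" by (simp add: \<phi>_def phi_pol_def \<beta>_def)
        define q where "q = real s / (2 * real d)"
        define H where "H = kk / q powr (1 / a)"
        note pr = regimeB_params[OF ta(2) conjunct1[OF sd] conjunct2[OF sd] kk, folded q_def H_def]
        have m1: "q * H\<^sup>2 \<le> 1" by (rule pr(7))
        have m2: "q * H\<^sup>2 \<ge> kk\<^sup>2 * \<phi> / 2" using pr(6) by (simp add: \<phi>e \<beta>_def)
        have m0: "q * H\<^sup>2 \<ge> 0" using pr(1) by simp
        have "L x0 / 16 \<le> L x0 / 4" using Lx0 by simp
        then have "ennreal (L x0 / 16) \<le> ennreal (L x0 / 4)" by (rule ennreal_leI)
        also have "ennreal (L x0 / 4) \<le> S"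
        proof (rule regimeB[OF L T k x0(1) pr(1) pr(2) pr(3) pr(4) pr(5)])
          show "\<And>P \<sigma> \<theta>. P \<in> noise_class a \<tau> \<Longrightarrow> 0 < \<sigma> \<Longrightarrow> \<theta> \<in> Theta d s \<Longrightarrow> risk L c d T P \<sigma> \<theta> \<phi> \<le> S"
            by (rule Sup)
          have "q * H\<^sup>2 / 3 \<le> q * H\<^sup>2 / (2 * (1/2 + q * H\<^sup>2))"
            using m0 m1 by (intro divide_left_mono) auto
          moreover have "kk\<^sup>2 * \<phi> / 6 \<le> q * H\<^sup>2 / 3" using m2 by (simp add: mult.commute)
          ultimately have A: "kk\<^sup>2 * \<phi> / 6 \<le> q * H\<^sup>2 / (2 * (1/2 + q * H\<^sup>2))" by linarith
          have "x0 \<le> c * kk\<^sup>2 / 6"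
          proof -
            have "6 * x0 / kk\<^sup>2 * kk\<^sup>2 \<le> c * kk\<^sup>2" using c6 by (intro mult_right_mono) auto
            then show ?thesis using kk by simp
          qed
          also have "c * kk\<^sup>2 / 6 = c / \<phi> * (kk\<^sup>2 * \<phi> / 6)" using \<phi>0 by simp
          also have "\<dots> \<le> c / \<phi> * (q * H\<^sup>2 / (2 * (1/2 + q * H\<^sup>2)))"
            using A k by (rule mult_left_mono)
          finally show "x0 \<le> c / \<phi> * (q * H\<^sup>2 / (2 * (1/2 + q * H\<^sup>2)))" .
        qed
        finally show ?thesis .
      qed
      then show "ennreal (L x0 / 16) \<le> (SUP P\<in>noise_class a \<tau>. SUP \<sigma>\<in>{0<..}. SUP \<theta>\<in>Theta d s.
        risk L c d T P \<sigma> \<theta> (phi_pol a s d))" unfolding S_def \<phi>_def .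
    qed
  qed
  show ?thesis
    apply (rule exI[where x=c])
    apply (rule conjI[OF c0])
    apply (rule exI[where x="L x0 / 16"])
    using main Lx0 by simp
qed

end
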